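(* Let $G=(V,E)$ be a finite graph (parallel edges and loops allowed) and $e\neq f$ edges of $G$. In every monomial appearing in $\mathcal{M}_{ef}(1)$, and in every monomial appearing in $\sum_{\beta,\gamma}\mathbf{x}^{\beta}\mathbf{x}^{\gamma}\sum_{\mathbf{m}\in B_{\beta,\gamma}}\mathbf{m}$ (sum over ordered pairs of disjoint subsets $\beta,\gamma$ of $E\setminus\{e,f\}$), each variable $x_g$ has degree at most two.
   Context: Let $\{x_g : g\in E\}$ be variables. For $F\subseteq E$ write $\mathbf{x}^F=\prod_{g\in F}x_g$ and $k(F)$ for the number of connected components of $(V,F)$. For $A,B\subseteq E$ set $\mathcal{T}_A^B=\sum_{F\subseteq E:\,A\subseteq F,\,F\cap B=\varnothing}\mathbf{x}^F q^{k(F)}$; $\mathcal{T}_e^f=\mathcal{T}_{\{e\}}^{\{f\}}$, $\mathcal{T}_f^e=\mathcal{T}_{\{f\}}^{\{e\}}$, $\mathcal{T}_{ef}=\mathcal{T}_{\{e,f\}}^{\varnothing}$, $\mathcal{T}^{ef}=\mathcal{T}_{\varnothing}^{\{e,f\}}$, and $\mathcal{M}_{ef}(q)=(\mathcal{T}_e^f\mathcal{T}_f^e-\mathcal{T}_{ef}\mathcal{T}^{ef})/(x_ex_f(1-q))$, a polynomial. Let $E^{ef}=E\setminus\{e,f\}$. A subset $F\subseteq E^{ef}$ is a paracel if $k(F+e)=k(F+f)=k(F)-1$ and $(V,F+e)$, $(V,F+f)$ have the same connected components; an edge of $E^{ef}\setminus F$ is a smoot for paracel $F$ if it joins the same two components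 of $(V,F)$ as $e$ and $f$. For disjoint $\beta,\gamma\subseteq E^{ef}$, $A_{\beta,\gamma}$ is the set of $\alpha\subseteq E^{ef}$ disjoint from $\beta,\gamma$ with $\gamma\cup\alpha$ a paracel and every edge of $\beta$ a smoot for $\gamma\cup\alpha$; $\alpha,\alpha'\in A_{\beta,\gamma}$ are twins if $\alpha\cap\alpha'\in A_{\beta,\gamma}$; $B_{\beta,\gamma}$ is the set of distinct monomials $\mathbf{x}^{\alpha}\mathbf{x}^{\alpha'}$ with $\alpha,\alpha'$ twins. *)

theory Defs
  imports "HOL-Library.Poly_Mapping" "HOL-Computational_Algebra.Polynomial"
begin

text \<open>A finite multigraph: vertex set V, edge set E, each edge g has endpoints ends g
  (a pair; loops are edges with equal endpoints, parallel edges are distinct edge names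
  with the same endpoints).\<close>

type_synonym 'e monomial = "'e \<Rightarrow>\<^sub>0 nat"
text \<open>Polynomials in the variables x_g (g an edge) with coefficients in Z[q].\<close>
type_synonym 'e qpoly = "'e monomial \<Rightarrow>\<^sub>0 int poly"
type_synonym 'e zpoly = "'e monomial \<Rightarrow>\<^sub>0 int"

definition adj :: "'v set \<Rightarrow> ('e \<Rightarrow> 'v \<times> 'v) \<Rightarrow> 'e set \<Rightarrow> ('v \<times> 'v) set" where
  "adj V ends F = {(u,v). u \<in> V \<and> v \<in> V \<and>
      (\<exists>g\<in>F. ends g = (u,v) \<or> ends g = (v,u))}"

definition conn :: "'v set \<Rightarrow> ('e \<Rightarrow> 'v \<times> 'v) \<Rightarrow> 'e set \<Rightarrow> ('v \<times> 'v) set" where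
  "conn V ends F = (adj V ends F)\<^sup>* \<inter> (V \<times> V)"

definition comps :: "'v set \<Rightarrow> ('e \<Rightarrow> 'v \<times> 'v) \<Rightarrow> 'e set \<Rightarrow> 'v set set" where
  "comps V ends F = V // conn V ends F"

definition ncomp :: "'v set \<Rightarrow> ('e \<Rightarrow> 'v \<times> 'v) \<Rightarrow> 'e set \<Rightarrow> nat" where
  "ncomp V ends F = card (comps V ends F)"

definition comp_of :: "'v set \<Rightarrow> ('e \<Rightarrow> 'v \<times> 'v) \<Rightarrow> 'e set \<Rightarrow> 'v \<Rightarrow> 'v set" where
  "comp_of V ends F v = conn V ends F `` {v}"

definition xmon :: "'e set \<Rightarrow> 'e monomial" where
  "xmon F = (\<Sum>g\<in>F. Poly_Mapping.single g 1)"

definition xvar :: "'e \<Rightarrow> 'e qpoly" where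
  "xvar g = Poly_Mapping.single (Poly_Mapping.single g 1) 1"

definition Tpoly :: "'v set \<Rightarrow> 'e set \<Rightarrow> ('e \<Rightarrow> 'v \<times> 'v) \<Rightarrow> 'e set \<Rightarrow> 'e set \<Rightarrow> 'e qpoly" where
  "Tpoly V E ends A B = (\<Sum>F\<in>{F. F \<subseteq> E \<and> A \<subseteq> F \<and> F \<inter> B = {}}.
      Poly_Mapping.single (xmon F) (monom 1 (ncomp V ends F)))"

text \<open>M_ef(q) = (T_e^f T_f^e - T_ef T^ef) / (x_e x_f (1-q)), i.e. the polynomial P with
  x_e x_f (1-q) P = T_e^f T_f^e - T_ef T^ef\<close>
definition Mpoly :: "'v set \<Rightarrow> 'e set \<Rightarrow> ('e \<Rightarrow> 'v \<times> 'v) \<Rightarrow> 'e \<Rightarrow> 'e \<Rightarrow> 'e qpoly" where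
  "Mpoly V E ends e f = (THE P.
     Tpoly V E ends {e} {f} * Tpoly V E ends {f} {e} - Tpoly V E ends {e,f} {} * Tpoly V E ends {} {e,f}
     = xvar e * xvar f * Poly_Mapping.single 0 (1 - [:0,1:]) * P)"

definition eval_q1 :: "'e qpoly \<Rightarrow> 'e zpoly" where
  "eval_q1 P = Poly_Mapping.map (\<lambda>c. poly c 1) P"

definition paracel :: "'v set \<Rightarrow> 'e set \<Rightarrow> ('e \<Rightarrow> 'v \<times> 'v) \<Rightarrow> 'e \<Rightarrow> 'e \<Rightarrow> 'e set \<Rightarrow> bool" where
  "paracel V E ends e f F \<longleftrightarrow> F \<subseteq> E - {e,f} \<and>
     ncomp V ends (insert e F) = ncomp V ends F - 1 \<and>
     ncomp V ends (insert f F) = ncomp V ends F - 1 \<and>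
     comps V ends (insert e F) = comps V ends (insert f F)"

definition smoot :: "'v set \<Rightarrow> 'e set \<Rightarrow> ('e \<Rightarrow> 'v \<times> 'v) \<Rightarrow> 'e \<Rightarrow> 'e \<Rightarrow> 'e set \<Rightarrow> 'e \<Rightarrow> bool" where
  "smoot V E ends e f F g \<longleftrightarrow> g \<in> (E - {e,f}) - F \<and>
     (let cs = (\<lambda>h. {comp_of V ends F (fst (ends h)), comp_of V ends F (snd (ends h))})
      in cs g = cs e \<and> cs g = cs f)"

definition Aset :: "'v set \<Rightarrow> 'e set \<Rightarrow> ('e \<Rightarrow> 'v \<times> 'v) \<Rightarrow> 'e \<Rightarrow> 'e \<Rightarrow> 'e set \<Rightarrow> 'e set \<Rightarrow> 'e set set" where
  "Aset V E ends e f \<beta> \<gamma> = {\<alpha>. \<alpha> \<subseteq> E - {e,f} \<and> \<alpha> \<inter> \<beta> = {} \<and> \<alpha> \<inter> \<gamma> = {} \<and>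
     paracel V E ends e f (\<gamma> \<union> \<alpha>) \<and> (\<forall>g\<in>\<beta>. smoot V E ends e f (\<gamma> \<union> \<alpha>) g)}"

definition twins :: "'v set \<Rightarrow> 'e set \<Rightarrow> ('e \<Rightarrow> 'v \<times> 'v) \<Rightarrow> 'e \<Rightarrow> 'e \<Rightarrow> 'e set \<Rightarrow> 'e set \<Rightarrow> 'e set \<Rightarrow> 'e set \<Rightarrow> bool" where
  "twins V E ends e f \<beta> \<gamma> \<alpha> \<alpha>' \<longleftrightarrow> \<alpha> \<in> Aset V E ends e f \<beta> \<gamma> \<and> \<alpha>' \<in> Aset V E ends e f \<beta> \<gamma> \<and>
     \<alpha> \<inter> \<alpha>' \<in> Aset V E ends e f \<beta> \<gamma>"

definition Bset :: "'v set \<Rightarrow> 'e set \<Rightarrow> ('e \<Rightarrow> 'v \<times> 'v) \<Rightarrow> 'e \<Rightarrow> 'e \<Rightarrow> 'e set \<Rightarrow> 'e set \<Rightarrow> 'e monomial set" where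
  "Bset V E ends e f \<beta> \<gamma> = {xmon \<alpha> + xmon \<alpha>' | \<alpha> \<alpha>'. twins V E ends e f \<beta> \<gamma> \<alpha> \<alpha>'}"

definition Spoly :: "'v set \<Rightarrow> 'e set \<Rightarrow> ('e \<Rightarrow> 'v \<times> 'v) \<Rightarrow> 'e \<Rightarrow> 'e \<Rightarrow> 'e zpoly" where
  "Spoly V E ends e f = (\<Sum>(\<beta>,\<gamma>)\<in>{(\<beta>,\<gamma>). \<beta> \<subseteq> E - {e,f} \<and> \<gamma> \<subseteq> E - {e,f} \<and> \<beta> \<inter> \<gamma> = {}}.
      Poly_Mapping.single (xmon \<beta> + xmon \<gamma>) 1 *
      (\<Sum>m\<in>Bset V E ends e f \<beta> \<gamma>. Poly_Mapping.single m 1))"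

end

theory Submission
  imports Defs
begin

lemma lookup_single_mult_shift:
  fixes s m :: "'e \<Rightarrow>\<^sub>0 nat" and c :: "'b::comm_semiring_1"
  shows "Poly_Mapping.lookup (Poly_Mapping.single s c * P) (s + m) = c * Poly_Mapping.lookup P m"
proof -
  have "Poly_Mapping.lookup (Poly_Mapping.single s c * P) (s + m)
     = (\<Sum>l. (c when s = l) * (\<Sum>q. Poly_Mapping.lookup P q when s + m = l + q))"
    by (simp add: lookup_mult lookup_single)
  also have "\<dots> = (\<Sum>l. (c * (\<Sum>q. Poly_Mapping.lookup P q when s + m = s + q)) when s = l)"
    by (rule Sum_any.cong) (simp add: when_def)
  also have "\<dots> = c * (\<Sum>q. Poly_Mapping.lookup P q when s + m = s + q)" by simp
  also have "(\<Sum>q. Poly_Mapping.lookup P q when s + m = s + q) = (\<Sum>q. Poly_Mapping.lookup P q when q = m)"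
    by (rule Sum_any.cong) (auto simp: when_def)
  finally show ?thesis by simp
qed

lemma one_minus_dvd_one_minus_power:
  fixes x :: "'a::comm_ring_1"
  shows "(1 - x) dvd (1 - x ^ n)"
proof (induction n)
  case 0 then show ?case by simp
next
  case (Suc n)
  have "1 - x ^ Suc n = (1 - x ^ n) + x ^ n * (1 - x)" by (simp add: algebra_simps)
  moreover have "(1 - x) dvd ((1 - x ^ n) + x ^ n * (1 - x))"
    using Suc by (rule dvd_add) simp
  ultimately show ?case by metis
qed

lemma one_minus_dvd_diff_power:
  fixes x :: "'a::comm_ring_1"
  shows "(1 - x) dvd (x ^ a - x ^ b)"
proof -
  have "x ^ a - x ^ b = (1 - x ^ b) - (1 - x ^ a)" by simp
  moreover have "(1 - x) dvd ((1 - x ^ b) - (1 - x ^ a))"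
    using one_minus_dvd_one_minus_power[of x b] one_minus_dvd_one_minus_power[of x a]
    by (rule dvd_diff)
  ultimately show ?thesis by metis
qed

lemma monom_one_power: "monom (1::'a::comm_ring_1) n = [:0,1:] ^ n"
  by (induction n) (auto simp: monom_Suc)

lemma lookup_xmon: "Poly_Mapping.lookup (xmon X) g = (if finite X \<and> g \<in> X then 1 else 0)"
proof (cases "finite X")
  case True
  then show ?thesis
    by (simp add: xmon_def lookup_sum lookup_single when_def)
next
  case False
  then show ?thesis by (simp add: xmon_def)
qed

lemma xmon_insert: "finite A \<Longrightarrow> g \<notin> A \<Longrightarrow> xmon (insert g A) = Poly_Mapping.single g 1 + xmon A"
  by (simp add: xmon_def)

lemma xmon_union: "finite A \<Longrightarrow> finite B \<Longrightarrow> A \<inter> B = {} \<Longrightarrow> xmon (A \<union> B) = xmon A + xmon B"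
  by (simp add: xmon_def sum.union_disjoint)

lemma Tpoly_reindex:
  assumes "finite E" "A0 \<subseteq> {e,f}" "B0 = {e,f} - A0" "e \<in> E" "f \<in> E"
  shows "Tpoly V E ends A0 B0 = (\<Sum>A\<in>Pow (E-{e,f}).
     Poly_Mapping.single (xmon A0 + xmon A) (monom 1 (ncomp V ends (A0 \<union> A))))"
proof -
  have idx: "{F. F \<subseteq> E \<and> A0 \<subseteq> F \<and> F \<inter> B0 = {}} = (\<lambda>A. A0 \<union> A) ` Pow (E-{e,f})"
  proof (rule set_eqI, rule iffI)
    fix F assume "F \<in> {F. F \<subseteq> E \<and> A0 \<subseteq> F \<and> F \<inter> B0 = {}}"
    then have "F = A0 \<union> (F - {e,f})" "F - {e,f} \<in> Pow (E-{e,f})" using assms by auto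
    then show "F \<in> (\<lambda>A. A0 \<union> A) ` Pow (E-{e,f})" by blast
  qed (use assms in auto)
  have inj: "inj_on (\<lambda>A. A0 \<union> A) (Pow (E-{e,f}))"
  proof (rule inj_onI)
    fix A B assume "A \<in> Pow (E-{e,f})" "B \<in> Pow (E-{e,f})" "A0 \<union> A = A0 \<union> B"
    then show "A = B" using assms(2) by blast
  qed
  have fA0: "finite A0" using assms(2) finite_subset by blast
  show ?thesis
    unfolding Tpoly_def idx sum.reindex[OF inj] o_def
  proof (rule sum.cong[OF refl])
    fix A assume A: "A \<in> Pow (E-{e,f})"
    then have "finite A" using assms(1) finite_subset by auto
    moreover have "A0 \<inter> A = {}" using A assms(2) by auto
    ultimately show "Poly_Mapping.single (xmon (A0 \<union> A)) (monom 1 (ncomp V ends (A0 \<union> A))) =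
        Poly_Mapping.single (xmon A0 + xmon A) (monom 1 (ncomp V ends (A0 \<union> A)))"
      using fA0 by (simp add: xmon_union)
  qed
qed

lemma M_char:
  fixes V :: "'v set" and E :: "'e set" and ends :: "'e \<Rightarrow> 'v \<times> 'v" and e f :: 'e
  assumes "finite E" "e \<in> E" "f \<in> E" "e \<noteq> f"
  shows "\<exists>r. Mpoly V E ends e f = (\<Sum>A\<in>Pow (E-{e,f}). \<Sum>B\<in>Pow (E-{e,f}).
            Poly_Mapping.single (xmon A + xmon B) (r A B))"
proof -
  define E' where "E' = E - {e,f}"
  define se :: "'e monomial" where "se = Poly_Mapping.single e 1"
  define sf :: "'e monomial" where "sf = Poly_Mapping.single f 1"
  define c :: "int poly" where "c = 1 - [:0,1:]"
  define k where "k = ncomp V ends"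
  define a where "a = (\<lambda>A B. k ({e} \<union> A) + k ({f} \<union> B))"
  define b where "b = (\<lambda>A B. k ({e,f} \<union> A) + k ({} \<union> B))"
  have "\<forall>n m. \<exists>r. monom (1::int) n - monom 1 m = c * r"
    using one_minus_dvd_diff_power[of "[:0,1:]::int poly"] unfolding c_def monom_one_power dvd_def
    by blast
  then obtain r where r: "\<And>n m. monom (1::int) n - monom 1 m = c * r n m" by metis
  define P where "P = (\<Sum>A\<in>Pow E'. \<Sum>B\<in>Pow E'.
            Poly_Mapping.single (xmon A + xmon B) (r (a A B) (b A B)))"
  let ?D = "Tpoly V E ends {e} {f} * Tpoly V E ends {f} {e} - Tpoly V E ends {e,f} {} * Tpoly V E ends {} {e,f}"
  have T1: "Tpoly V E ends {e} {f} = (\<Sum>A\<in>Pow E'. Poly_Mapping.single (se + xmon A) (monom 1 (k ({e} \<union> A))))"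
    using Tpoly_reindex[of E "{e}" e f "{f}" V ends] assms unfolding E'_def se_def k_def
    by (auto simp: xmon_def)
  have T2: "Tpoly V E ends {f} {e} = (\<Sum>A\<in>Pow E'. Poly_Mapping.single (sf + xmon A) (monom 1 (k ({f} \<union> A))))"
  proof -
    have ef: "{e} = {e,f} - {f}" using assms by auto
    show ?thesis
      using Tpoly_reindex[of E "{f}" e f "{e}" V ends, OF _ _ ef] assms unfolding E'_def sf_def k_def
      by (auto simp: xmon_def)
  qed
  have T3: "Tpoly V E ends {e,f} {} = (\<Sum>A\<in>Pow E'. Poly_Mapping.single (se + sf + xmon A) (monom 1 (k ({e,f} \<union> A))))"
    using Tpoly_reindex[of E "{e,f}" e f "{}" V ends] assms unfolding E'_def sf_def se_def k_def
    by (auto simp: xmon_def)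
  have T4: "Tpoly V E ends {} {e,f} = (\<Sum>A\<in>Pow E'. Poly_Mapping.single (xmon A) (monom 1 (k ({} \<union> A))))"
    using Tpoly_reindex[of E "{}" e f "{e,f}" V ends] assms unfolding E'_def k_def
    by (auto simp: xmon_def)
  have P12: "Tpoly V E ends {e} {f} * Tpoly V E ends {f} {e} = (\<Sum>A\<in>Pow E'. \<Sum>B\<in>Pow E'.
       Poly_Mapping.single (se + sf + (xmon A + xmon B)) (monom 1 (a A B)))"
    unfolding T1 T2 sum_product a_def
    by (simp add: mult_single mult_monom ac_simps)
  have P34: "Tpoly V E ends {e,f} {} * Tpoly V E ends {} {e,f} = (\<Sum>A\<in>Pow E'. \<Sum>B\<in>Pow E'.
       Poly_Mapping.single (se + sf + (xmon A + xmon B)) (monom 1 (b A B)))"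
    unfolding T3 T4 sum_product b_def
    by (simp add: mult_single mult_monom ac_simps)
  have D: "?D = (\<Sum>A\<in>Pow E'. \<Sum>B\<in>Pow E'.
       Poly_Mapping.single (se + sf + (xmon A + xmon B)) (monom 1 (a A B) - monom 1 (b A B)))"
    unfolding P12 P34 by (simp add: single_diff sum_subtractf)
  also have "\<dots> = Poly_Mapping.single (se + sf) c * P"
    unfolding P_def r by (simp add: sum_distrib_left mult_single)
  finally have D: "?D = Poly_Mapping.single (se + sf) c * P" .
  have X: "xvar e * xvar f * Poly_Mapping.single 0 (1 - [:0,1:]) = Poly_Mapping.single (se + sf) c"
    by (simp add: xvar_def se_def sf_def c_def mult_single)
  have c0: "c \<noteq> 0"
  proof
    assume "c = 0"
    then have "poly c 0 = 0" by simp
    then show False by (simp add: c_def)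
  qed
  have uniq: "Q = P" if "?D = Poly_Mapping.single (se + sf) c * Q" for Q
  proof -
    have "Poly_Mapping.lookup Q m = Poly_Mapping.lookup P m" for m
      using lookup_single_mult_shift[of "se+sf" c Q m] lookup_single_mult_shift[of "se+sf" c P m]
        that D c0 by simp
    then show ?thesis by (simp add: poly_mapping_eq_iff fun_eq_iff)
  qed
  have "Mpoly V E ends e f = P"
    unfolding Mpoly_def X
  proof (rule the_equality)
    show "?D = Poly_Mapping.single (se + sf) c * P" by (rule D)
  qed (use uniq in auto)
  then show ?thesis unfolding P_def E'_def by (intro exI[of _ "\<lambda>A B. r (a A B) (b A B)"])
qed

lemma sum_nonzero_obtain:
  assumes "sum h S \<noteq> (0::'a::comm_monoid_add)"
  obtains x where "x \<in> S" "h x \<noteq> 0"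
  using assms sum.not_neutral_contains_not_neutral by blast

theorem lemma4p1:
  fixes V :: "'v set" and E :: "'e set" and ends :: "'e \<Rightarrow> 'v \<times> 'v" and e f :: 'e
  assumes "finite V" and "finite E"
    and "\<forall>g\<in>E. fst (ends g) \<in> V \<and> snd (ends g) \<in> V"
    and "e \<in> E" and "f \<in> E" and "e \<noteq> f"
  shows "(\<forall>m g. Poly_Mapping.lookup (eval_q1 (Mpoly V E ends e f)) m \<noteq> 0 \<longrightarrow> Poly_Mapping.lookup m g \<le> 2)
    \<and> (\<forall>m g. Poly_Mapping.lookup (Spoly V E ends e f) m \<noteq> 0 \<longrightarrow> Poly_Mapping.lookup m g \<le> 2)"
proof (intro conjI allI impI)
  fix m g
  assume H: "Poly_Mapping.lookup (eval_q1 (Mpoly V E ends e f)) m \<noteq> 0"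
  obtain r where r: "Mpoly V E ends e f = (\<Sum>A\<in>Pow (E-{e,f}). \<Sum>B\<in>Pow (E-{e,f}).
            Poly_Mapping.single (xmon A + xmon B) (r A B))"
    using M_char[of E e f V ends] assms by blast
  have "Poly_Mapping.lookup (Mpoly V E ends e f) m \<noteq> 0"
    using H by (auto simp: eval_q1_def map.rep_eq when_def)
  then have "(\<Sum>A\<in>Pow (E-{e,f}). \<Sum>B\<in>Pow (E-{e,f}). (r A B when xmon A + xmon B = m)) \<noteq> 0"
    unfolding r by (simp add: lookup_sum lookup_single)
  then obtain A where "(\<Sum>B\<in>Pow (E-{e,f}). (r A B when xmon A + xmon B = m)) \<noteq> 0"
    by (rule sum_nonzero_obtain)
  then obtain B where "(r A B when xmon A + xmon B = m) \<noteq> 0"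
    by (rule sum_nonzero_obtain)
  then have "m = xmon A + xmon B" by (auto simp: when_def split: if_splits)
  then show "Poly_Mapping.lookup m g \<le> 2"
    by (simp add: lookup_add lookup_xmon)
next
  fix m g
  assume H: "Poly_Mapping.lookup (Spoly V E ends e f) m \<noteq> 0"
  then obtain p where p: "p \<in> {(\<beta>,\<gamma>). \<beta> \<subseteq> E - {e,f} \<and> \<gamma> \<subseteq> E - {e,f} \<and> \<beta> \<inter> \<gamma> = {}}"
    and pn: "Poly_Mapping.lookup ((\<lambda>(\<beta>,\<gamma>). Poly_Mapping.single (xmon \<beta> + xmon \<gamma>) 1 *
      (\<Sum>m\<in>Bset V E ends e f \<beta> \<gamma>. Poly_Mapping.single m (1::int))) p) m \<noteq> 0"
    unfolding Spoly_def lookup_sum by (rule sum_nonzero_obtain)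
  obtain \<beta> \<gamma> where pe: "p = (\<beta>, \<gamma>)" by fastforce
  have bg: "\<beta> \<inter> \<gamma> = {}" using p pe by auto
  from pn have "(\<Sum>m'\<in>Bset V E ends e f \<beta> \<gamma>. if m = xmon \<beta> + xmon \<gamma> + m' then (1::int) else 0) \<noteq> 0"
    by (simp add: pe sum_distrib_left mult_single lookup_sum lookup_single)
  then obtain m' where m': "m' \<in> Bset V E ends e f \<beta> \<gamma>" and "(if m = xmon \<beta> + xmon \<gamma> + m' then (1::int) else 0) \<noteq> 0"
    by (rule sum_nonzero_obtain)
  then have mm: "m = xmon \<beta> + xmon \<gamma> + m'" by (auto split: if_splits)
  from m' obtain \<alpha> \<alpha>' where m'e: "m' = xmon \<alpha> + xmon \<alpha>'" and tw: "twins V E ends e f \<beta> \<gamma> \<alpha> \<alpha>'"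
    unfolding Bset_def by blast
  have d: "\<alpha> \<inter> \<beta> = {}" "\<alpha> \<inter> \<gamma> = {}" "\<alpha>' \<inter> \<beta> = {}" "\<alpha>' \<inter> \<gamma> = {}"
    using tw unfolding twins_def Aset_def by auto
  show "Poly_Mapping.lookup m g \<le> 2"
    unfolding mm m'e using d bg by (auto simp: lookup_add lookup_xmon)
qed

end
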